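(* Let $A\in\mathfrak{B}_{n\times m}$ be a semi-canonical matrix with $r(A)=\langle x_1,\dots,x_n\rangle$ and $c(A)=\langle y_1,\dots,y_m\rangle$. Then there exist integers $s,t$ with $0\le s\le m$, $0\le t\le n$ such that $x_1=2^s-1$ and $y_1=2^t-1$.
   Context: $\mathfrak{B}_{n\times m}$ denotes the set of all $n\times m$ matrices with entries in $\{0,1\}$. For $A=[a_{ij}]\in\mathfrak{B}_{n\times m}$, $r(A)=\langle x_1,\dots,x_n\rangle$ with $x_i=\sum_{j=1}^m a_{ij}2^{m-j}$ and $c(A)=\langle y_1,\dots,y_m\rangle$ with $y_j=\sum_{i=1}^n a_{ij}2^{n-i}$. $A$ is semi-canonical if $x_1\le x_2\le\cdots\le x_n$ and $y_1\le y_2\le\cdots\le y_m$. *)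

theory Defs
  imports Main
begin

(* An n x m binary matrix is a function A :: nat => nat => nat, entries A i j for
   1 <= i <= n, 1 <= j <= m (1-based, as in the paper), each in {0,1}. *)
definition binary_matrix :: "nat \<Rightarrow> nat \<Rightarrow> (nat \<Rightarrow> nat \<Rightarrow> nat) \<Rightarrow> bool" where
  "binary_matrix n m A \<longleftrightarrow> (\<forall>i\<in>{1..n}. \<forall>j\<in>{1..m}. A i j \<in> {0, 1})"

definition row_val :: "nat \<Rightarrow> (nat \<Rightarrow> nat \<Rightarrow> nat) \<Rightarrow> nat \<Rightarrow> nat" where
  "row_val m A i = (\<Sum>j=1..m. A i j * 2 ^ (m - j))"

definition col_val :: "nat \<Rightarrow> (nat \<Rightarrow> nat \<Rightarrow> nat) \<Rightarrow> nat \<Rightarrow> nat" where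
  "col_val n A j = (\<Sum>i=1..n. A i j * 2 ^ (n - i))"

definition semi_canonical :: "nat \<Rightarrow> nat \<Rightarrow> (nat \<Rightarrow> nat \<Rightarrow> nat) \<Rightarrow> bool" where
  "semi_canonical n m A \<longleftrightarrow>
     (\<forall>i\<in>{1..n}. \<forall>i'\<in>{1..n}. i \<le> i' \<longrightarrow> row_val m A i \<le> row_val m A i') \<and>
     (\<forall>j\<in>{1..m}. \<forall>j'\<in>{1..m}. j \<le> j' \<longrightarrow> col_val n A j \<le> col_val n A j')"

end

theory Submission
  imports Defs
begin

lemma reidx: "(\<Sum>j=1..m. f j * (2::nat) ^ (m - j)) = (\<Sum>k<m. f (m - k) * 2 ^ k)"
  by (rule sum.reindex_bij_witness[where i="\<lambda>k. m - k" and j="\<lambda>j. m - j"]) auto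

lemma bnd: "(\<And>k. k < m \<Longrightarrow> g k \<in> {0,1}) \<Longrightarrow> (\<Sum>k<m. g k * (2::nat) ^ k) < 2 ^ m"
proof (induction m)
  case 0 then show ?case by simp
next
  case (Suc m)
  have "(\<Sum>k<m. g k * (2::nat) ^ k) < 2 ^ m" using Suc by auto
  moreover have "g m * 2 ^ m \<le> (2::nat) ^ m" using Suc.prems[of m] by auto
  ultimately have "(\<Sum>k<m. g k * (2::nat) ^ k) + g m * 2 ^ m < 2 ^ m + 2 ^ m" by linarith
  then show ?case by simp
qed

lemma mono_sum: "(\<And>k. k < m \<Longrightarrow> g k \<in> {0,1}) \<Longrightarrow> (\<And>k k'. k \<le> k' \<Longrightarrow> k' < m \<Longrightarrow> g k' \<le> g k)
  \<Longrightarrow> \<exists>s\<le>m. (\<Sum>k<m. g k * (2::nat) ^ k) = 2 ^ s - 1"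
proof (induction m)
  case 0 then show ?case by simp
next
  case (Suc m)
  show ?case
  proof (cases "g m = 0")
    case True
    from Suc obtain s where "s \<le> m" "(\<Sum>k<m. g k * (2::nat) ^ k) = 2 ^ s - 1" by force
    then show ?thesis using True by (intro exI[of _ s]) auto
  next
    case False
    then have gm: "g m = 1" using Suc.prems(1)[of m] by auto
    have "\<forall>k<Suc m. g k = 1"
    proof (intro allI impI)
      fix k assume "k < Suc m"
      then have "g m \<le> g k" using Suc.prems(2)[of k m] by auto
      then show "g k = 1" using Suc.prems(1)[of k] \<open>k < Suc m\<close> gm by auto
    qed
    then have "(\<Sum>k<Suc m. g k * (2::nat) ^ k) = (\<Sum>k<Suc m. 2 ^ k)" by auto
    also have "\<dots> = 2 ^ Suc m - 1"
    proof -
      have "(\<Sum>k<j. (2::nat) ^ k) = 2 ^ j - 1" for j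
        by (induction j) auto
      then show ?thesis .
    qed
    finally show ?thesis by blast
  qed
qed

lemma key:
  assumes "\<And>j. j \<in> {1..m} \<Longrightarrow> f j \<in> {0,1}"
    and "\<And>j j'. j \<in> {1..m} \<Longrightarrow> j' \<in> {1..m} \<Longrightarrow> j \<le> j' \<Longrightarrow> f j \<le> f j'"
  shows "\<exists>s\<le>m. (\<Sum>j=1..m. f j * (2::nat) ^ (m - j)) = 2 ^ s - 1"
  unfolding reidx
  by (rule mono_sum) (use assms in auto)

lemma topbit:
  assumes "\<And>j. j \<in> {1..m} \<Longrightarrow> f j \<in> {0,1}" and "m \<ge> 1"
  shows "f 1 = 0 \<Longrightarrow> (\<Sum>j=1..m. f j * (2::nat) ^ (m - j)) < 2 ^ (m - 1)"
    and "f 1 = 1 \<Longrightarrow> (\<Sum>j=1..m. f j * (2::nat) ^ (m - j)) \<ge> 2 ^ (m - 1)"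
proof -
  obtain p where p: "m = Suc p" using assms(2) by (cases m) auto
  have e: "(\<Sum>j=1..m. f j * (2::nat) ^ (m - j)) = (\<Sum>k<p. f (m - k) * 2 ^ k) + f 1 * 2 ^ p"
    unfolding reidx p by simp
  have b: "(\<Sum>k<p. f (m - k) * (2::nat) ^ k) < 2 ^ p"
    by (rule bnd) (use assms(1) p in auto)
  show "f 1 = 0 \<Longrightarrow> (\<Sum>j=1..m. f j * (2::nat) ^ (m - j)) < 2 ^ (m - 1)"
    using e b p by simp
  show "f 1 = 1 \<Longrightarrow> (\<Sum>j=1..m. f j * (2::nat) ^ (m - j)) \<ge> 2 ^ (m - 1)"
    using e p by simp
qed

theorem corollary1:
  fixes n m :: nat and A :: "nat \<Rightarrow> nat \<Rightarrow> nat"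
  assumes "n \<ge> 1" and "m \<ge> 1"
    and "binary_matrix n m A"
    and "semi_canonical n m A"
  shows "\<exists>s t :: nat. s \<le> m \<and> t \<le> n \<and>
           row_val m A 1 = 2 ^ s - 1 \<and> col_val n A 1 = 2 ^ t - 1"
proof -
  have bin: "\<And>i j. i \<in> {1..n} \<Longrightarrow> j \<in> {1..m} \<Longrightarrow> A i j \<in> {0,1}"
    using assms(3) unfolding binary_matrix_def by blast
  have r1: "\<exists>s\<le>m. row_val m A 1 = 2 ^ s - 1"
    unfolding row_val_def
  proof (rule key)
    show "\<And>j. j \<in> {1..m} \<Longrightarrow> A 1 j \<in> {0,1}" using bin assms(1) by auto
    fix j j' assume j: "j \<in> {1..m}" "j' \<in> {1..m}" "j \<le> j'"
    show "A 1 j \<le> A 1 j'"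
    proof (rule ccontr)
      assume "\<not> A 1 j \<le> A 1 j'"
      then have "A 1 j = 1" "A 1 j' = 0" using bin[of 1 j] bin[of 1 j'] j assms(1) by auto
      then have "col_val n A j \<ge> 2 ^ (n - 1)" "col_val n A j' < 2 ^ (n - 1)"
        unfolding col_val_def
        using topbit[of n "\<lambda>i. A i j"] topbit[of n "\<lambda>i. A i j'"] bin j assms(1) by auto
      moreover have "col_val n A j \<le> col_val n A j'"
        using assms(4) j unfolding semi_canonical_def by blast
      ultimately show False by simp
    qed
  qed
  have c1: "\<exists>t\<le>n. col_val n A 1 = 2 ^ t - 1"
    unfolding col_val_def
  proof (rule key)
    show "\<And>i. i \<in> {1..n} \<Longrightarrow> A i 1 \<in> {0,1}" using bin assms(2) by auto
    fix j j' assume j: "j \<in> {1..n}" "j' \<in> {1..n}" "j \<le> j'"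
    show "A j 1 \<le> A j' 1"
    proof (rule ccontr)
      assume "\<not> A j 1 \<le> A j' 1"
      then have "A j 1 = 1" "A j' 1 = 0" using bin[of j 1] bin[of j' 1] j assms(2) by auto
      then have "row_val m A j \<ge> 2 ^ (m - 1)" "row_val m A j' < 2 ^ (m - 1)"
        unfolding row_val_def
        using topbit[of m "\<lambda>i. A j i"] topbit[of m "\<lambda>i. A j' i"] bin j assms(2) by auto
      moreover have "row_val m A j \<le> row_val m A j'"
        using assms(4) j unfolding semi_canonical_def by blast
      ultimately show False by simp
    qed
  qed
  from r1 c1 show ?thesis by blast
qed

end
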